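(* (i) Let $h:\omega\to\omega$ be nondecreasing and let $g(n)=h(2n)$. Then $\mathrm{IOE}(h)\equiv_W\mathrm{IOE}(g)$ and $\mathrm{AED}(h)\equiv_S\mathrm{AED}(g)$. (ii) For all real numbers $a,b>1$, $\mathrm{IOE}(n\mapsto 2^{(a^n)})\equiv_W\mathrm{IOE}(n\mapsto 2^{(b^n)})$ and $\mathrm{AED}(n\mapsto2^{(a^n)})\equiv_S\mathrm{AED}(n\mapsto2^{(b^n)})$.
   Context: A mass problem is a nonempty set of functions $\omega\to\omega$. For mass problems $\mathcal B,\mathcal C$: $\mathcal B\le_S\mathcal C$ if there is a Turing functional $\Phi$ with $\Phi^g\in\mathcal B$ for all $g\in\mathcal C$; $\mathcal B\le_W\mathcal C$ if every $g\in\mathcal C$ Turing computes some $f\in\mathcal B$; $\equiv_S,\equiv_W$ are the induced equivalences. For a function $h$ (with values in $\omega$ or positive reals), $\mathrm{IOE}(h)$ is the set of functions $y:\omega\to\omega$ such that for every computable function $x$ with $x(n)<h(n)$ for all $n$, there are infinitely many $n$ with $x(n)=y(n)$; $\mathrm{AED}(h)$ is the set of functions $y:\omega\to\omega$ with $y(n)<h(n)$ for all $n$ such that for every computable function $x$, $x(n)\ne y(n)$ for all but finitely many $n$. *)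

theory Defs
  imports Complex_Main
begin

text \<open>Codes of partial recursive functions with one oracle call primitive.  A Turing functional is a code; its
  result on oracle g is the function n |-> value on input [n].\<close>

datatype recf = Zero | Succ | Proj nat | Orc | Comp recf "recf list"
  | Prec recf recf | Mn recf

inductive eval :: "(nat \<Rightarrow> nat) \<Rightarrow> recf \<Rightarrow> nat list \<Rightarrow> nat \<Rightarrow> bool"
  for g :: "nat \<Rightarrow> nat" where
  ev_zero: "eval g Zero xs 0"
| ev_succ: "eval g Succ (x # xs) (Suc x)"
| ev_proj: "i < length xs \<Longrightarrow> eval g (Proj i) xs (xs ! i)"
| ev_orc: "eval g Orc (x # xs) (g x)"
| ev_comp: "list_all2 (\<lambda>h y. eval g h xs y) hs ys \<Longrightarrow> eval g f ys z
             \<Longrightarrow> eval g (Comp f hs) xs z"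
| ev_prec0: "eval g f xs y \<Longrightarrow> eval g (Prec f h) (0 # xs) y"
| ev_precS: "eval g (Prec f h) (n # xs) r \<Longrightarrow> eval g h (n # r # xs) y
             \<Longrightarrow> eval g (Prec f h) (Suc n # xs) y"
| ev_mn: "eval g f (n # xs) 0 \<Longrightarrow> (\<forall>m<n. \<exists>k. eval g f (m # xs) (Suc k))
             \<Longrightarrow> eval g (Mn f) xs n"

definition functional_yields :: "recf \<Rightarrow> (nat \<Rightarrow> nat) \<Rightarrow> (nat \<Rightarrow> nat) \<Rightarrow> bool" where
  "functional_yields c g f \<longleftrightarrow> (\<forall>n. eval g c [n] (f n))"

definition turing_computes :: "(nat \<Rightarrow> nat) \<Rightarrow> (nat \<Rightarrow> nat) \<Rightarrow> bool" where
  "turing_computes g f \<longleftrightarrow> (\<exists>c. functional_yields c g f)"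

text \<open>Computable = computable with the (computable) empty oracle.\<close>
definition computable :: "(nat \<Rightarrow> nat) \<Rightarrow> bool" where
  "computable f \<longleftrightarrow> turing_computes (\<lambda>_. 0) f"

definition strong_red :: "(nat \<Rightarrow> nat) set \<Rightarrow> (nat \<Rightarrow> nat) set \<Rightarrow> bool" (infix "\<le>\<^sub>S" 50) where
  "B \<le>\<^sub>S C \<longleftrightarrow> (\<exists>c. \<forall>g\<in>C. \<exists>f\<in>B. functional_yields c g f)"

definition weak_red :: "(nat \<Rightarrow> nat) set \<Rightarrow> (nat \<Rightarrow> nat) set \<Rightarrow> bool" (infix "\<le>\<^sub>W" 50) where
  "B \<le>\<^sub>W C \<longleftrightarrow> (\<forall>g\<in>C. \<exists>f\<in>B. turing_computes g f)"

definition strong_eq :: "(nat \<Rightarrow> nat) set \<Rightarrow> (nat \<Rightarrow> nat) set \<Rightarrow> bool" (infix "\<equiv>\<^sub>S" 50) where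
  "B \<equiv>\<^sub>S C \<longleftrightarrow> B \<le>\<^sub>S C \<and> C \<le>\<^sub>S B"

definition weak_eq :: "(nat \<Rightarrow> nat) set \<Rightarrow> (nat \<Rightarrow> nat) set \<Rightarrow> bool" (infix "\<equiv>\<^sub>W" 50) where
  "B \<equiv>\<^sub>W C \<longleftrightarrow> B \<le>\<^sub>W C \<and> C \<le>\<^sub>W B"

text \<open>Bounds h are real-valued (natural-number bounds are coerced).\<close>
definition IOE :: "(nat \<Rightarrow> real) \<Rightarrow> (nat \<Rightarrow> nat) set" where
  "IOE h = {y. \<forall>x. computable x \<and> (\<forall>n. real (x n) < h n) \<longrightarrow> infinite {n. x n = y n}}"

definition AED :: "(nat \<Rightarrow> real) \<Rightarrow> (nat \<Rightarrow> nat) set" where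
  "AED h = {y. (\<forall>n. real (y n) < h n) \<and> (\<forall>x. computable x \<longrightarrow> finite {n. x n = y n})}"

end

theory Submission
  imports Defs
begin


fun subst :: "recf \<Rightarrow> recf \<Rightarrow> recf" where
  "subst c Orc = Comp c [Proj 0]"
| "subst c (Comp f hs) = Comp (subst c f) (map (subst c) hs)"
| "subst c (Prec f h) = Prec (subst c f) (subst c h)"
| "subst c (Mn f) = Mn (subst c f)"
| "subst c Zero = Zero"
| "subst c Succ = Succ"
| "subst c (Proj i) = Proj i"

lemma comp1: "eval g f [y] z \<Longrightarrow> eval g h xs y \<Longrightarrow> eval g (Comp f [h]) xs z"
  by (rule ev_comp[where ys="[y]"]) auto

lemma subst_eval: "eval f e xs v \<Longrightarrow> functional_yields c g f \<Longrightarrow> eval g (subst c e) xs v"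
proof (induction rule: eval.induct)
  case (ev_zero xs) then show ?case by (simp add: eval.ev_zero)
next
  case (ev_succ x xs) then show ?case by (simp add: eval.ev_succ)
next
  case (ev_proj i xs) then show ?case by (simp add: eval.ev_proj)
next
  case (ev_orc x xs)
  then show ?case unfolding functional_yields_def
    by (auto intro!: comp1 eval.ev_proj[where i=0 and xs="x#xs", simplified])
next
  case (ev_comp xs hs ys f' z)
  have "list_all2 (\<lambda>h y. eval g h xs y) (map (subst c) hs) ys"
    using ev_comp.IH ev_comp.prems by (auto simp: list.rel_map elim!: list_all2_mono)
  then show ?case using ev_comp by (auto intro: eval.ev_comp)
next
  case (ev_prec0 f' xs y h) then show ?case by (auto intro: eval.ev_prec0)
next
  case (ev_precS f' h n xs r y) then show ?case by (auto intro: eval.ev_precS)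
next
  case (ev_mn f' n xs) then show ?case by (auto intro!: eval.ev_mn)
qed

lemma yields_trans: "functional_yields c1 g f \<Longrightarrow> functional_yields c2 f e \<Longrightarrow>
   functional_yields (subst c1 c2) g e"
  unfolding functional_yields_def by (auto intro: subst_eval simp: functional_yields_def)

lemma orc_yields: "functional_yields Orc g g"
  unfolding functional_yields_def by (auto intro: ev_orc)

lemma weak_trans: "A \<le>\<^sub>W B \<Longrightarrow> B \<le>\<^sub>W C \<Longrightarrow> A \<le>\<^sub>W C"
  unfolding weak_red_def turing_computes_def by (meson yields_trans)

lemma strong_trans: "A \<le>\<^sub>S B \<Longrightarrow> B \<le>\<^sub>S C \<Longrightarrow> A \<le>\<^sub>S C"
  unfolding strong_red_def by (meson yields_trans)

lemma weak_sub: "C \<subseteq> B \<Longrightarrow> B \<le>\<^sub>W C"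
  unfolding weak_red_def turing_computes_def using orc_yields by blast

lemma strong_sub: "C \<subseteq> B \<Longrightarrow> B \<le>\<^sub>S C"
  unfolding strong_red_def using orc_yields by blast

definition DBL where "DBL = Prec Zero (Comp Succ [Comp Succ [Proj 1]])"
lemma DBL: "eval g DBL [n] (2*n)"
proof (induction n)
  case 0 then show ?case unfolding DBL_def by (auto intro: ev_prec0 ev_zero)
next
  case (Suc n)
  have "eval g (Comp Succ [Comp Succ [Proj 1]]) [n, 2*n] (Suc (Suc (2*n)))"
    by (intro comp1 ev_succ) (auto intro: ev_succ ev_proj[where i=1 and xs="[n,2*n]", simplified])
  then show ?case using Suc unfolding DBL_def by (auto intro: ev_precS)
qed

definition DBL1 where "DBL1 = Comp Succ [DBL]"
lemma DBL1: "eval g DBL1 [n] (2*n+1)"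
  unfolding DBL1_def using DBL by (auto intro!: comp1 ev_succ)

definition NOT where "NOT = Prec (Comp Succ [Zero]) Zero"
lemma NOT: "eval g NOT [p] (if p = 0 then 1 else 0)"
proof (induction p)
  case 0 then show ?case unfolding NOT_def by (auto intro!: ev_prec0 comp1 ev_succ ev_zero)
next
  case (Suc p) then show ?case unfolding NOT_def by (auto intro: ev_precS ev_zero)
qed

definition PAR where "PAR = Prec Zero (Comp NOT [Proj 1])"
lemma PAR: "eval g PAR [m] (m mod 2)"
proof (induction m)
  case 0 then show ?case unfolding PAR_def by (auto intro: ev_prec0 ev_zero)
next
  case (Suc m)
  have p: "eval g (Proj 1) [m, m mod 2] (m mod 2)"
    using ev_proj[where i=1 and xs="[m, m mod 2]" and g=g] by simp
  have "eval g NOT [m mod 2] (Suc m mod 2)"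
    using NOT[of g "m mod 2"] by (auto simp: mod_Suc)
  then have "eval g (Comp NOT [Proj 1]) [m, m mod 2] (Suc m mod 2)"
    using p by (rule comp1)
  then show ?case using Suc unfolding PAR_def by (auto intro: ev_precS)
qed

lemma SEL: "eval g A [m] a \<Longrightarrow> eval g B [m] b \<Longrightarrow>
   eval g (Prec A (Comp B [Proj 2])) [pv, m] (if pv = 0 then a else b)"
proof (induction pv)
  case 0 then show ?case by (auto intro: ev_prec0)
next
  case (Suc k)
  obtain r where r: "eval g (Prec A (Comp B [Proj 2])) [k, m] r" using Suc by blast
  have "eval g (Comp B [Proj 2]) [k, r, m] b"
    by (rule comp1[OF _ ev_proj[where i=2 and xs="[k, r, m]", simplified]]) (use Suc in simp)
  then show ?case using r by (auto intro: ev_precS)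
qed

definition HALF where "HALF = Prec Zero (Comp (Prec (Proj 0) (Comp Succ [Proj 2])) [Comp PAR [Proj 0], Proj 1])"
lemma HALF: "eval g HALF [n] (n div 2)"
proof (induction n)
  case 0 then show ?case unfolding HALF_def by (auto intro: ev_prec0 ev_zero)
next
  case (Suc n)
  have s: "eval g (Prec (Proj 0) (Comp Succ [Proj 2])) [n mod 2, n div 2]
       (if n mod 2 = 0 then n div 2 else Suc (n div 2))"
    by (rule SEL) (auto intro: ev_proj[where i=0 and xs="[n div 2]", simplified] ev_succ)
  have "eval g (Comp (Prec (Proj 0) (Comp Succ [Proj 2])) [Comp PAR [Proj 0], Proj 1]) [n, n div 2] (Suc n div 2)"
  proof (rule ev_comp[where ys="[n mod 2, n div 2]"])
    show "list_all2 (\<lambda>h y. eval g h [n, n div 2] y) [Comp PAR [Proj 0], Proj 1] [n mod 2, n div 2]"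
      by (auto intro!: comp1[OF PAR] ev_proj[where i=0 and xs="[n, n div 2]", simplified]
            ev_proj[where i=1 and xs="[n, n div 2]", simplified])
    show "eval g (Prec (Proj 0) (Comp Succ [Proj 2])) [n mod 2, n div 2] (Suc n div 2)"
    proof -
      have e: "(if n mod 2 = 0 then n div 2 else Suc (n div 2)) = Suc n div 2" by presburger
      show ?thesis using s unfolding e .
    qed
  qed
  then show ?case using Suc unfolding HALF_def by (auto intro: ev_precS)
qed

definition INTL where "INTL c0 c1 = Comp (Prec (Comp c0 [HALF]) (Comp (Comp c1 [HALF]) [Proj 2])) [PAR, Proj 0]"
lemma INTL: "(\<And>n. eval g c0 [n] (x0 n)) \<Longrightarrow> (\<And>n. eval g c1 [n] (x1 n)) \<Longrightarrow>
  eval g (INTL c0 c1) [m] (if m mod 2 = 0 then x0 (m div 2) else x1 (m div 2))"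
proof -
  assume a0: "\<And>n. eval g c0 [n] (x0 n)" and a1: "\<And>n. eval g c1 [n] (x1 n)"
  have s: "eval g (Prec (Comp c0 [HALF]) (Comp (Comp c1 [HALF]) [Proj 2])) [m mod 2, m]
     (if m mod 2 = 0 then x0 (m div 2) else x1 (m div 2))"
    by (rule SEL) (auto intro!: comp1 HALF a0 a1)
  have p0: "eval g (Proj 0) [m] m"
    using ev_proj[where i=0 and xs="[m]" and g=g] by simp
  show ?thesis unfolding INTL_def
    by (rule ev_comp[where ys="[m mod 2, m]", OF _ s]) (auto intro!: PAR p0)
qed



lemma inf_split: "infinite (S::nat set) \<Longrightarrow> infinite {n. 2*n \<in> S} \<or> infinite {n. 2*n+1 \<in> S}"
proof (rule ccontr)
  assume inf: "infinite S" and "\<not> (infinite {n. 2*n \<in> S} \<or> infinite {n. 2*n+1 \<in> S})"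
  then have f: "finite {n. 2*n \<in> S}" "finite {n. 2*n+1 \<in> S}" by auto
  have "S \<subseteq> (\<lambda>n. 2*n) ` {n. 2*n \<in> S} \<union> (\<lambda>n. 2*n+1) ` {n. 2*n+1 \<in> S}"
  proof
    fix m assume m: "m \<in> S"
    show "m \<in> (\<lambda>n. 2*n) ` {n. 2*n \<in> S} \<union> (\<lambda>n. 2*n+1) ` {n. 2*n+1 \<in> S}"
    proof (cases "even m")
      case True then show ?thesis using m by (auto elim!: evenE)
    next
      case False then show ?thesis using m by (auto elim!: oddE)
    qed
  qed
  then have "finite S" using f by (meson finite_Un finite_imageI finite_subset)
  then show False using inf by simp
qed

lemma comp_shift: "computable x \<Longrightarrow> computable (\<lambda>n. x (2*n)) \<and> computable (\<lambda>n. x (2*n+1))"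
  unfolding computable_def turing_computes_def functional_yields_def
  by (metis comp1 DBL DBL1)

lemma IOE_anti: "(\<And>n. h n \<le> h' n) \<Longrightarrow> IOE h' \<subseteq> IOE h"
  unfolding IOE_def by (auto; meson less_le_trans)

lemma AED_mono: "(\<And>n. h n \<le> h' n) \<Longrightarrow> AED h \<subseteq> AED h'"
  unfolding AED_def by (auto intro: less_le_trans)

lemma core_W2:
  fixes h :: "nat \<Rightarrow> real"
  assumes mono: "mono h"
  shows "IOE (\<lambda>n. h (2*n)) \<le>\<^sub>W IOE h"
  unfolding weak_red_def
proof
  fix y assume y: "y \<in> IOE h"
  define z0 where "z0 = (\<lambda>n. y (2*n))"
  define z1 where "z1 = (\<lambda>n. y (2*n+1))"
  have t0: "turing_computes y z0" unfolding turing_computes_def functional_yields_def z0_def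
    by (metis comp1 DBL ev_orc)
  have t1: "turing_computes y z1" unfolding turing_computes_def functional_yields_def z1_def
    by (metis comp1 DBL1 ev_orc)
  have "z0 \<in> IOE (\<lambda>n. h (2*n)) \<or> z1 \<in> IOE (\<lambda>n. h (2*n))"
  proof (rule ccontr)
    assume "\<not> ?thesis"
    then obtain x0 x1 where x0: "computable x0" "\<And>n. real (x0 n) < h (2*n)" "finite {n. x0 n = z0 n}"
      and x1: "computable x1" "\<And>n. real (x1 n) < h (2*n)" "finite {n. x1 n = z1 n}"
      unfolding IOE_def by auto
    obtain c0 where c0: "\<And>n. eval (\<lambda>_. 0) c0 [n] (x0 n)"
      using x0(1) unfolding computable_def turing_computes_def functional_yields_def by blast
    obtain c1 where c1: "\<And>n. eval (\<lambda>_. 0) c1 [n] (x1 n)"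
      using x1(1) unfolding computable_def turing_computes_def functional_yields_def by blast
    define X where "X = (\<lambda>m. if m mod 2 = 0 then x0 (m div 2) else x1 (m div 2))"
    have cX: "computable X" unfolding computable_def turing_computes_def functional_yields_def X_def
      using INTL[OF c0 c1] by blast
    have bX: "real (X m) < h m" for m
    proof -
      have le: "h (2 * (m div 2)) \<le> h m" using mono by (auto intro: monoD)
      show ?thesis
        using x0(2)[of "m div 2"] x1(2)[of "m div 2"] le unfolding X_def by auto
    qed
    have inf: "infinite {m. X m = y m}" using y cX bX unfolding IOE_def by blast
    have e0: "{n. 2*n \<in> {m. X m = y m}} = {n. x0 n = z0 n}" unfolding X_def z0_def by auto
    have e1: "{n. 2*n+1 \<in> {m. X m = y m}} = {n. x1 n = z1 n}" unfolding X_def z1_def by auto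
    show False using inf_split[OF inf] e0 e1 x0(3) x1(3) by auto
  qed
  then show "\<exists>f\<in>IOE (\<lambda>n. h (2*n)). turing_computes y f" using t0 t1 by blast
qed

lemma core_S2:
  fixes h :: "nat \<Rightarrow> real"
  assumes mono: "mono h"
  shows "AED h \<le>\<^sub>S AED (\<lambda>n. h (2*n))"
  unfolding strong_red_def
proof (intro exI ballI)
  fix z assume z: "z \<in> AED (\<lambda>n. h (2*n))"
  define f where "f = (\<lambda>m. z (m div 2))"
  have fy: "functional_yields (Comp Orc [HALF]) z f" unfolding functional_yields_def f_def
    by (metis comp1 HALF ev_orc)
  have "f \<in> AED h"
    unfolding AED_def
  proof (intro CollectI conjI allI impI)
    fix m
    have le: "h (2 * (m div 2)) \<le> h m" using mono by (auto intro: monoD)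
    show "real (f m) < h m" using z le unfolding AED_def f_def by (auto intro: less_le_trans)
  next
    fix x assume cx: "computable x"
    show "finite {n. x n = f n}"
    proof (rule ccontr)
      assume "infinite {n. x n = f n}"
      from inf_split[OF this] have "infinite {n. x (2*n) = z n} \<or> infinite {n. x (2*n+1) = z n}"
        unfolding f_def by simp
      then show False using comp_shift[OF cx] z unfolding AED_def by auto
    qed
  qed
  then show "\<exists>f\<in>AED h. functional_yields (Comp Orc [HALF]) z f" using fy by blast
qed

lemma core:
  fixes h :: "nat \<Rightarrow> real"
  assumes mono: "mono h"
  shows "IOE h \<equiv>\<^sub>W IOE (\<lambda>n. h (2*n)) \<and> AED h \<equiv>\<^sub>S AED (\<lambda>n. h (2*n))"
proof -
  have le: "\<And>n. h n \<le> h (2*n)" using mono by (auto intro: monoD)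
  have w1: "IOE h \<le>\<^sub>W IOE (\<lambda>n. h (2*n))"
    by (rule weak_sub, rule IOE_anti, rule le)
  have s1: "AED (\<lambda>n. h (2*n)) \<le>\<^sub>S AED h"
    by (rule strong_sub, rule AED_mono, rule le)
  show ?thesis unfolding weak_eq_def strong_eq_def
    using w1 s1 core_W2[OF mono] core_S2[OF mono] by (intro conjI)
qed

lemma weak_refl: "A \<le>\<^sub>W A" by (rule weak_sub) (rule subset_refl)
lemma strong_refl: "A \<le>\<^sub>S A" by (rule strong_sub) (rule subset_refl)

lemma iter:
  fixes h :: "nat \<Rightarrow> real"
  assumes mono: "mono h"
  shows "IOE h \<equiv>\<^sub>W IOE (\<lambda>n. h (2^k*n)) \<and> AED h \<equiv>\<^sub>S AED (\<lambda>n. h (2^k*n))"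
proof (induction k)
  case 0
  have e: "(\<lambda>n. h (2^0*n)) = h" by simp
  show ?case unfolding e weak_eq_def strong_eq_def using weak_refl strong_refl by (intro conjI)
next
  case (Suc k)
  have m: "mono (\<lambda>n. h (2^k*n))" by (intro monoI monoD[OF mono]) simp
  have e: "(\<lambda>n. h (2^Suc k*n)) = (\<lambda>n. (\<lambda>n. h (2^k*n)) (2*n))" by (simp add: mult_ac)
  have c: "IOE (\<lambda>n. h (2^k*n)) \<equiv>\<^sub>W IOE (\<lambda>n. (\<lambda>n. h (2^k*n)) (2*n)) \<and>
     AED (\<lambda>n. h (2^k*n)) \<equiv>\<^sub>S AED (\<lambda>n. (\<lambda>n. h (2^k*n)) (2*n))"
    by (rule core[OF m])
  show ?case unfolding e weak_eq_def strong_eq_def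
  proof (intro conjI)
    show "IOE h \<le>\<^sub>W IOE (\<lambda>n. (\<lambda>n. h (2^k*n)) (2*n))"
      using Suc c unfolding weak_eq_def by (metis weak_trans)
    show "IOE (\<lambda>n. (\<lambda>n. h (2^k*n)) (2*n)) \<le>\<^sub>W IOE h"
      using Suc c unfolding weak_eq_def by (metis weak_trans)
    show "AED h \<le>\<^sub>S AED (\<lambda>n. (\<lambda>n. h (2^k*n)) (2*n))"
      using Suc c unfolding strong_eq_def by (metis strong_trans)
    show "AED (\<lambda>n. (\<lambda>n. h (2^k*n)) (2*n)) \<le>\<^sub>S AED h"
      using Suc c unfolding strong_eq_def by (metis strong_trans)
  qed
qed



lemma H_mono: "(b::real) > 1 \<Longrightarrow> mono (\<lambda>n::nat. 2 powr (b ^ n))"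
  by (auto intro!: monoI powr_mono power_increasing)

lemma H_exists: "(a::real) > 1 \<Longrightarrow> b > 1 \<Longrightarrow> \<exists>m. \<forall>n. 2 powr (a ^ n) \<le> 2 powr (b ^ (2^m * n))"
proof -
  assume a: "a > 1" and b: "b > 1"
  obtain m where m: "a < b ^ m" using real_arch_pow[OF b] by blast
  have "b ^ m \<le> b ^ (2^m)" using b by (intro power_increasing) (auto intro: less_imp_le less_exp)
  then have ab: "a \<le> b ^ (2^m)" using m by simp
  have "2 powr (a ^ n) \<le> 2 powr (b ^ (2^m * n))" for n
  proof -
    have "a ^ n \<le> (b ^ (2^m)) ^ n" using ab a by (intro power_mono) auto
    then show ?thesis by (intro powr_mono) (auto simp: power_mult)
  qed
  then show ?thesis by blast
qed

lemma L: "(a::real) > 1 \<Longrightarrow> b > 1 \<Longrightarrow>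
   IOE (\<lambda>n. 2 powr (a ^ n)) \<le>\<^sub>W IOE (\<lambda>n. 2 powr (b ^ n)) \<and>
   AED (\<lambda>n. 2 powr (a ^ n)) \<le>\<^sub>S AED (\<lambda>n. 2 powr (b ^ n))"
proof -
  assume a: "a > 1" and b: "b > 1"
  obtain m where m: "\<And>n. 2 powr (a ^ n) \<le> 2 powr (b ^ (2^m * n))" using H_exists[OF a b] by blast
  obtain k where k: "\<And>n. 2 powr (b ^ n) \<le> 2 powr (a ^ (2^k * n))" using H_exists[OF b a] by blast
  have i1: "IOE (\<lambda>n. 2 powr (b ^ (2^m * n))) \<le>\<^sub>W IOE (\<lambda>n. 2 powr (b ^ n))"
    using iter[OF H_mono[OF b], of m] unfolding weak_eq_def by simp
  have i2: "IOE (\<lambda>n. 2 powr (a ^ n)) \<le>\<^sub>W IOE (\<lambda>n. 2 powr (b ^ (2^m * n)))"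
    by (rule weak_sub, rule IOE_anti) (rule m)
  have s1: "AED (\<lambda>n. 2 powr (a ^ n)) \<le>\<^sub>S AED (\<lambda>n. 2 powr (a ^ (2^k * n)))"
    using iter[OF H_mono[OF a], of k] unfolding strong_eq_def by simp
  have s2: "AED (\<lambda>n. 2 powr (a ^ (2^k * n))) \<le>\<^sub>S AED (\<lambda>n. 2 powr (b ^ n))"
    by (rule strong_sub, rule AED_mono) (rule k)
  show ?thesis using weak_trans[OF i2 i1] strong_trans[OF s1 s2] by blast
qed

theorem mainTheorem4:
  shows "(\<forall>h :: nat \<Rightarrow> nat. mono h \<longrightarrow>
            IOE (\<lambda>n. real (h n)) \<equiv>\<^sub>W IOE (\<lambda>n. real (h (2 * n))) \<and>
            AED (\<lambda>n. real (h n)) \<equiv>\<^sub>S AED (\<lambda>n. real (h (2 * n))))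
       \<and> (\<forall>a b :: real. a > 1 \<longrightarrow> b > 1 \<longrightarrow>
            IOE (\<lambda>n. 2 powr (a ^ n)) \<equiv>\<^sub>W IOE (\<lambda>n. 2 powr (b ^ n)) \<and>
            AED (\<lambda>n. 2 powr (a ^ n)) \<equiv>\<^sub>S AED (\<lambda>n. 2 powr (b ^ n)))"
proof (intro conjI allI impI)
  fix h :: "nat \<Rightarrow> nat" assume mh: "mono h"
  have m: "mono (\<lambda>n. real (h n))" by (intro monoI) (simp add: monoD[OF mh])
  show "IOE (\<lambda>n. real (h n)) \<equiv>\<^sub>W IOE (\<lambda>n. real (h (2 * n)))" using core[OF m] by simp
  show "AED (\<lambda>n. real (h n)) \<equiv>\<^sub>S AED (\<lambda>n. real (h (2 * n)))" using core[OF m] by simp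
next
  fix a b :: real assume a: "a > 1" and b: "b > 1"
  show "IOE (\<lambda>n. 2 powr (a ^ n)) \<equiv>\<^sub>W IOE (\<lambda>n. 2 powr (b ^ n))"
    using L[OF a b] L[OF b a] unfolding weak_eq_def by blast
  show "AED (\<lambda>n. 2 powr (a ^ n)) \<equiv>\<^sub>S AED (\<lambda>n. 2 powr (b ^ n))"
    using L[OF a b] L[OF b a] unfolding strong_eq_def by blast
qed


end
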